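(* Let $f,g:\mathbb{R}^2\to\mathbb{R}$ be Lipschitz continuous, let $(J,W)$ be a graphon and let $A\subseteq J$ be a measurable set of positive measure. Suppose that all the vertices in $A$ are twins. Then the cluster subspace $\mathcal C(A)$ is dynamically invariant for the graphon dynamical system $\mathcal D(J,W)$.
   Context: A graphon $(J,W)$ consists of a probability space $J=(\Omega,\mathcal A,\mu)$ and a symmetric measurable $W:\Omega\times\Omega\to[0,1]$. The graphon dynamical system $\mathcal D(J,W)$ is the flow on $L^1(J)$ given by $\dot u_x=f\big(u_x,\int_J W(x,y)g(u_x,u_y)\,d\mu(y)\big)$, where for each $t$ the equation holds for almost every $x$. The elements of a measurable set $A$ are twins if the function $y\mapsto W(x,y)$ (as an element of $L^1$, i.e. up to null sets) does not depend on $x\in A$. The cluster subspace $\mathcal C(A)$ is the set of $u\in L^1(J)$ that are constant on $A$ up to a null set. A subset is dynamically invariant if every trajectory starting in it stays in it for all $t\in\mathbb{R}$. *)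

theory Defs
  imports "HOL-Probability.Probability"
begin

definition graphon :: "'a measure \<Rightarrow> ('a \<Rightarrow> 'a \<Rightarrow> real) \<Rightarrow> bool" where
  "graphon M W \<longleftrightarrow> prob_space M
     \<and> (\<lambda>(x,y). W x y) \<in> borel_measurable (M \<Otimes>\<^sub>M M)
     \<and> (\<forall>x\<in>space M. \<forall>y\<in>space M. W x y = W y x)
     \<and> (\<forall>x\<in>space M. \<forall>y\<in>space M. 0 \<le> W x y \<and> W x y \<le> 1)"

definition lipschitz2 :: "(real \<Rightarrow> real \<Rightarrow> real) \<Rightarrow> bool" where
  "lipschitz2 f \<longleftrightarrow> (\<exists>C. C-lipschitz_on UNIV (\<lambda>(a,b). f a b))"

definition graphon_rhs ::
  "(real \<Rightarrow> real \<Rightarrow> real) \<Rightarrow> (real \<Rightarrow> real \<Rightarrow> real) \<Rightarrow> 'a measure \<Rightarrow> ('a \<Rightarrow> 'a \<Rightarrow> real)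
    \<Rightarrow> ('a \<Rightarrow> real) \<Rightarrow> 'a \<Rightarrow> real" where
  "graphon_rhs f g M W u x = f (u x) (\<integral>y. W x y * g (u x) (u y) \<partial>M)"

text \<open>A trajectory of D(J,W): a map from time (all of R) into L^1(J) that is differentiable
  in the L^1 norm with derivative given by the right-hand side.\<close>
definition graphon_trajectory ::
  "(real \<Rightarrow> real \<Rightarrow> real) \<Rightarrow> (real \<Rightarrow> real \<Rightarrow> real) \<Rightarrow> 'a measure \<Rightarrow> ('a \<Rightarrow> 'a \<Rightarrow> real)
    \<Rightarrow> (real \<Rightarrow> 'a \<Rightarrow> real) \<Rightarrow> bool" where
  "graphon_trajectory f g M W u \<longleftrightarrow>
     (\<forall>t. integrable M (u t)) \<and>
     (\<forall>t. ((\<lambda>h. \<integral>\<^sup>+x. ennreal \<bar>(u (t + h) x - u t x) / h - graphon_rhs f g M W (u t) x\<bar> \<partial>M)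
            \<longlongrightarrow> 0) (at 0))"

text \<open>Twins: the L^1 class of y \<mapsto> W x y is the same for all x in A.\<close>
definition twins :: "'a measure \<Rightarrow> ('a \<Rightarrow> 'a \<Rightarrow> real) \<Rightarrow> 'a set \<Rightarrow> bool" where
  "twins M W A \<longleftrightarrow> (\<forall>x\<in>A. \<forall>x'\<in>A. AE y in M. W x y = W x' y)"

definition cluster_subspace :: "'a measure \<Rightarrow> 'a set \<Rightarrow> ('a \<Rightarrow> real) set" where
  "cluster_subspace M A = {u. integrable M u \<and> (\<exists>c. AE x in M. x \<in> A \<longrightarrow> u x = c)}"

definition dyn_invariant ::
  "(real \<Rightarrow> real \<Rightarrow> real) \<Rightarrow> (real \<Rightarrow> real \<Rightarrow> real) \<Rightarrow> 'a measure \<Rightarrow> ('a \<Rightarrow> 'a \<Rightarrow> real)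
    \<Rightarrow> ('a \<Rightarrow> real) set \<Rightarrow> bool" where
  "dyn_invariant f g M W S \<longleftrightarrow>
     (\<forall>u t0. graphon_trajectory f g M W u \<and> u t0 \<in> S \<longrightarrow> (\<forall>t. u t \<in> S))"

end

theory Submission
  imports Defs
begin

definition mA :: "'a measure \<Rightarrow> 'a set \<Rightarrow> ('a \<Rightarrow> real) \<Rightarrow> real" where
  "mA M A v = (\<integral>x. v x * indicator A x \<partial>M) / measure M A"

definition PhiA :: "'a measure \<Rightarrow> 'a set \<Rightarrow> ('a \<Rightarrow> real) \<Rightarrow> real" where
  "PhiA M A v = (\<integral>x. \<bar>v x - mA M A v\<bar> * indicator A x \<partial>M)"

lemma key:
  fixes M :: "'a measure" and v w q :: "'a \<Rightarrow> real" and G :: "real \<Rightarrow> real"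
  assumes fm: "finite_measure M" and A: "A \<in> sets M" and pos: "measure M A > 0"
   and iv: "integrable M v" and iw: "integrable M w" and iG: "integrable M (\<lambda>x. G (v x))"
   and iq: "integrable M q"
   and K: "K \<ge> 0" and L: "\<And>a b. \<bar>G a - G b\<bar> \<le> K * \<bar>a - b\<bar>"
   and eq: "\<And>x. x \<in> A \<Longrightarrow> w x = v x + h * G (v x) + h * q x"
  shows "\<bar>PhiA M A w - PhiA M A v\<bar>
           \<le> \<bar>h\<bar> * (2*K*PhiA M A v + 2 * (\<integral>x. \<bar>q x\<bar> * indicator A x \<partial>M))"
proof -
  interpret finite_measure M by (fact fm)
  define \<mu> where "\<mu> = measure M A"
  define I where "I f = (\<integral>x. f x * indicator A x \<partial>M)" for f :: "'a \<Rightarrow> real"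
  have II: "integrable M (\<lambda>x. f x * indicator A x)" if "integrable M f" for f :: "'a \<Rightarrow> real"
    using integrable_real_mult_indicator[OF A that] .
  have ic: "integrable M (\<lambda>x. c)" for c :: real by simp
  have Iconst: "I (\<lambda>_. c) = c * \<mu>" for c
    unfolding I_def \<mu>_def using A by (simp add: measure_def)
  have Iadd: "I (\<lambda>x. f1 x + f2 x) = I f1 + I f2" if "integrable M f1" "integrable M f2" for f1 f2
    unfolding I_def using II[OF that(1)] II[OF that(2)] by (simp add: distrib_right)
  have Idiff: "I (\<lambda>x. f1 x - f2 x) = I f1 - I f2" if "integrable M f1" "integrable M f2" for f1 f2
    unfolding I_def using II[OF that(1)] II[OF that(2)] by (simp add: left_diff_distrib)
  have Imult: "I (\<lambda>x. c * f1 x) = c * I f1" for c f1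
    unfolding I_def by (simp add: mult.assoc)
  have Imono: "I f1 \<le> I f2" if "integrable M f1" "integrable M f2" "\<And>x. x \<in> A \<Longrightarrow> f1 x \<le> f2 x" for f1 f2
    unfolding I_def using II[OF that(1)] II[OF that(2)] that(3)
    by (intro integral_mono) (auto simp: indicator_def)
  have Iabs: "\<bar>I f\<bar> \<le> I (\<lambda>x. \<bar>f x\<bar>)" for f
    unfolding I_def using integral_abs_bound[of M "\<lambda>x. f x * indicator A x"]
    by (simp add: abs_mult)
  have Icong: "I f1 = I f2" if "\<And>x. x \<in> A \<Longrightarrow> f1 x = f2 x" for f1 f2
    unfolding I_def using that by (intro Bochner_Integration.integral_cong) (auto simp: indicator_def)
  define mv where "mv = I v / \<mu>"
  define mw where "mw = I w / \<mu>"
  define mG where "mG = I (\<lambda>x. G (v x)) / \<mu>"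
  define mq where "mq = I q / \<mu>"
  have mvd: "mA M A v = mv" unfolding mA_def mv_def I_def \<mu>_def ..
  have mwd: "mA M A w = mw" unfolding mA_def mw_def I_def \<mu>_def ..
  have Pv: "PhiA M A v = I (\<lambda>x. \<bar>v x - mv\<bar>)" unfolding PhiA_def I_def mvd ..
  have Pw: "PhiA M A w = I (\<lambda>x. \<bar>w x - mw\<bar>)" unfolding PhiA_def I_def mwd ..
  have mupos: "\<mu> > 0" using pos \<mu>_def by simp
  have "I w = I (\<lambda>x. v x + h * G (v x) + h * q x)" using eq by (intro Icong) auto
  also have "\<dots> = I v + h * I (\<lambda>x. G (v x)) + h * I q"
    using iv iG iq by (simp add: Iadd Imult)
  finally have Iw: "I w = I v + h * I (\<lambda>x. G (v x)) + h * I q" .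
  have mweq: "mw = mv + h * mG + h * mq"
    unfolding mw_def mv_def mG_def mq_def Iw using mupos by (simp add: field_simps)
  have iav: "integrable M (\<lambda>x. \<bar>v x - c\<bar>)" for c using iv by simp
  have iaw: "integrable M (\<lambda>x. \<bar>w x - c\<bar>)" for c using iw by simp
  have iaq: "integrable M (\<lambda>x. \<bar>q x - c\<bar>)" for c using iq by simp
  have iaG: "integrable M (\<lambda>x. \<bar>G (v x) - c\<bar>)" for c using iG by simp
  have iaG2: "integrable M (\<lambda>x. \<bar>c - G (v x)\<bar>)" for c using iG by simp
  have pw: "\<bar>\<bar>w x - mw\<bar> - \<bar>v x - mv\<bar>\<bar> \<le> \<bar>h\<bar> * (\<bar>G (v x) - mG\<bar> + \<bar>q x - mq\<bar>)" if "x \<in> A" for x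
  proof -
    have "w x - mw = (v x - mv) + h * (G (v x) - mG) + h * (q x - mq)"
      using eq[OF that] mweq by (simp add: algebra_simps)
    moreover have "\<bar>h * (G (v x) - mG) + h * (q x - mq)\<bar> \<le> \<bar>h\<bar> * (\<bar>G (v x) - mG\<bar> + \<bar>q x - mq\<bar>)"
      by (metis abs_mult abs_triangle_ineq distrib_left)
    ultimately show ?thesis by (smt (verit))
  qed
  have "\<bar>PhiA M A w - PhiA M A v\<bar> = \<bar>I (\<lambda>x. \<bar>w x - mw\<bar> - \<bar>v x - mv\<bar>)\<bar>"
    unfolding Pw Pv using iaw iav by (simp add: Idiff)
  also have "\<dots> \<le> I (\<lambda>x. \<bar>\<bar>w x - mw\<bar> - \<bar>v x - mv\<bar>\<bar>)" by (rule Iabs)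
  also have "\<dots> \<le> I (\<lambda>x. \<bar>h\<bar> * (\<bar>G (v x) - mG\<bar> + \<bar>q x - mq\<bar>))"
    using pw iaw iav iaG iaq by (intro Imono) auto
  also have "\<dots> = \<bar>h\<bar> * (I (\<lambda>x. \<bar>G (v x) - mG\<bar>) + I (\<lambda>x. \<bar>q x - mq\<bar>))"
    using iaG iaq by (simp add: Imult Iadd)
  finally have s1: "\<bar>PhiA M A w - PhiA M A v\<bar> \<le> \<bar>h\<bar> * (I (\<lambda>x. \<bar>G (v x) - mG\<bar>) + I (\<lambda>x. \<bar>q x - mq\<bar>))" .
  have "I (\<lambda>x. \<bar>q x - mq\<bar>) \<le> I (\<lambda>x. \<bar>q x\<bar> + \<bar>mq\<bar>)"
    using iaq iq by (intro Imono) auto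
  also have "\<dots> = I (\<lambda>x. \<bar>q x\<bar>) + \<bar>mq\<bar> * \<mu>" using iq by (simp add: Iadd Iconst)
  also have "\<bar>mq\<bar> * \<mu> = \<bar>I q\<bar>" unfolding mq_def using mupos by (simp add: abs_div)
  also have "\<bar>I q\<bar> \<le> I (\<lambda>x. \<bar>q x\<bar>)" by (rule Iabs)
  finally have s2: "I (\<lambda>x. \<bar>q x - mq\<bar>) \<le> 2 * I (\<lambda>x. \<bar>q x\<bar>)" by simp
  have "I (\<lambda>x. \<bar>G (v x) - mG\<bar>) \<le> I (\<lambda>x. \<bar>G (v x) - G mv\<bar> + \<bar>G mv - mG\<bar>)"
    using iaG by (intro Imono) auto
  also have "\<dots> = I (\<lambda>x. \<bar>G (v x) - G mv\<bar>) + \<bar>G mv - mG\<bar> * \<mu>" using iaG by (simp add: Iadd Iconst)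
  also have "I (\<lambda>x. \<bar>G (v x) - G mv\<bar>) \<le> I (\<lambda>x. K * \<bar>v x - mv\<bar>)"
    using iaG iav L by (intro Imono) auto
  also have "\<bar>G mv - mG\<bar> * \<mu> = \<bar>I (\<lambda>x. G mv - G (v x))\<bar>"
  proof -
    have "I (\<lambda>x. G mv - G (v x)) = G mv * \<mu> - I (\<lambda>x. G (v x))"
      using iG by (simp add: Idiff Iconst)
    also have "\<dots> = (G mv - mG) * \<mu>" unfolding mG_def using mupos by (simp add: field_simps)
    finally show ?thesis using mupos by (simp add: abs_mult)
  qed
  also have "\<bar>I (\<lambda>x. G mv - G (v x))\<bar> \<le> I (\<lambda>x. \<bar>G mv - G (v x)\<bar>)" by (rule Iabs)
  also have "\<dots> \<le> I (\<lambda>x. K * \<bar>v x - mv\<bar>)"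
    using iaG2 iav L by (intro Imono) (auto simp: abs_minus_commute)
  finally have s3: "I (\<lambda>x. \<bar>G (v x) - mG\<bar>) \<le> 2 * K * PhiA M A v"
    unfolding Pv by (simp add: Imult)
  have "\<bar>PhiA M A w - PhiA M A v\<bar> \<le> \<bar>h\<bar> * (2 * K * PhiA M A v + 2 * I (\<lambda>x. \<bar>q x\<bar>))"
    using s1 s2 s3 by (smt (verit) abs_ge_zero mult_left_mono)
  then show ?thesis unfolding I_def .
qed

lemma gron_fwd:
  fixes P :: "real \<Rightarrow> real"
  assumes nn: "\<And>t. P t \<ge> 0" and K: "K \<ge> 0" and z: "P t0 = 0"
   and est: "\<And>t \<eta>. \<eta> > 0 \<Longrightarrow> \<exists>\<delta>>0. \<forall>h. h \<noteq> 0 \<and> \<bar>h\<bar> < \<delta> \<longrightarrow> \<bar>P (t+h) - P t\<bar> \<le> \<bar>h\<bar> * (K * P t + \<eta>)"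
   and t1: "t0 \<le> t1"
  shows "P t1 = 0"
proof -
  have bnd: "P t1 \<le> \<epsilon> * exp ((K+1) * (t1 - t0))" if eps: "\<epsilon> > 0" for \<epsilon>
  proof -
    define B where "B r = \<epsilon> * exp ((K+1) * (r - t0))" for r
    have Bpos: "B r > 0" for r unfolding B_def using eps by simp
    have Bmono: "B r \<le> B r'" if "r \<le> r'" for r r'
      unfolding B_def using eps that K by (intro mult_left_mono) (auto intro: mult_left_mono)
    define S where "S = {r. t0 \<le> r \<and> r \<le> t1 \<and> (\<forall>s. t0 \<le> s \<and> s \<le> r \<longrightarrow> P s \<le> B s)}"
    have t0S: "t0 \<in> S" unfolding S_def using t1 z Bpos by (auto intro: less_imp_le)
    have bdd: "bdd_above S" unfolding S_def by (auto intro: bdd_aboveI[of _ t1])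
    define T where "T = Sup S"
    have t0T: "t0 \<le> T" unfolding T_def using t0S bdd by (rule cSup_upper)
    have Tt1: "T \<le> t1" unfolding T_def using t0S by (intro cSup_least) (auto simp: S_def)
    have below: "P s \<le> B s" if "t0 \<le> s" "s < T" for s
    proof -
      obtain r where "r \<in> S" "s < r" using \<open>s < T\<close> unfolding T_def
        using less_cSup_iff[OF _ bdd] t0S by blast
      then show ?thesis using that unfolding S_def by auto
    qed
    have PT: "P T \<le> B T"
    proof (cases "T = t0")
      case True then show ?thesis using z Bpos by (simp add: less_imp_le)
    next
      case False
      with t0T have lt: "t0 < T" by simp
      show ?thesis
      proof (rule ccontr)
        assume "\<not> P T \<le> B T"
        then have d: "P T - B T > 0" by simp
        obtain \<delta> where \<delta>: "\<delta> > 0" "\<forall>h. h \<noteq> 0 \<and> \<bar>h\<bar> < \<delta> \<longrightarrow> \<bar>P (T+h) - P T\<bar> \<le> \<bar>h\<bar> * (K * P T + 1)"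
          using est[of 1 T] by auto
        define h where "h = min (\<delta>/2) (min ((T - t0)/2) ((P T - B T) / (2 * (K * P T + 1))))"
        have KP: "K * P T + 1 > 0" using K nn[of T] by (smt (verit) mult_nonneg_nonneg)
        have hpos: "h > 0" unfolding h_def using \<delta> lt d KP by auto
        have hd: "h < \<delta>" unfolding h_def using \<delta>(1) by linarith
        have "\<bar>P (T + (-h)) - P T\<bar> \<le> \<bar>-h\<bar> * (K * P T + 1)" using \<delta>(2)[rule_format, of "-h"] hpos hd by simp
        then have "\<bar>P (T - h) - P T\<bar> \<le> h * (K * P T + 1)" using hpos by simp
        moreover have "h * (K * P T + 1) \<le> (P T - B T) / 2"
        proof -
          have "h \<le> (P T - B T) / (2 * (K * P T + 1))" unfolding h_def by linarith
          then have "h * (K * P T + 1) \<le> (P T - B T) / (2 * (K * P T + 1)) * (K * P T + 1)"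
            using KP by (intro mult_right_mono) auto
          also have "\<dots> = (P T - B T) / 2" using KP by (simp add: field_simps)
          finally show ?thesis .
        qed
        moreover have "P (T - h) \<le> B (T - h)"
        proof -
          have "h \<le> (T - t0)/2" unfolding h_def by linarith
          then show ?thesis using below[of "T - h"] hpos lt by simp
        qed
        moreover have "B (T - h) \<le> B T" using hpos by (intro Bmono) auto
        ultimately show False using d by auto
      qed
    qed
    have TS: "T \<in> S" unfolding S_def using t0T Tt1 below PT
      by (auto simp: le_less)
    have "T = t1"
    proof (rule ccontr)
      assume "T \<noteq> t1"
      with Tt1 have lt: "T < t1" by simp
      obtain \<delta> where \<delta>: "\<delta> > 0" "\<forall>h. h \<noteq> 0 \<and> \<bar>h\<bar> < \<delta> \<longrightarrow> \<bar>P (T+h) - P T\<bar> \<le> \<bar>h\<bar> * (K * P T + B T)"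
        using est[of "B T" T] Bpos by auto
      define h where "h = min (\<delta>/2) (t1 - T)"
      have hpos: "h > 0" unfolding h_def using \<delta> lt by auto
      have "T + h \<in> S" unfolding S_def
      proof (intro CollectI conjI allI impI)
        show "t0 \<le> T + h" using t0T hpos by simp
        show "T + h \<le> t1" unfolding h_def by linarith
        fix s assume s: "t0 \<le> s \<and> s \<le> T + h"
        show "P s \<le> B s"
        proof (cases "s \<le> T")
          case True then show ?thesis using TS s unfolding S_def by auto
        next
          case False
          define h' where "h' = s - T"
          have h': "h' > 0" "h' < \<delta>" using False s hpos unfolding h'_def h_def by auto
          have "P (T + h') - P T \<le> h' * (K * P T + B T)"
            using \<delta>(2)[rule_format, of h'] h' by auto
          also have "\<dots> \<le> h' * (K * B T + B T)"
            using h' K PT by (intro mult_left_mono add_right_mono mult_left_mono) auto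
          finally have "P (T + h') \<le> B T * (1 + (K+1) * h')" using PT by (simp add: algebra_simps)
          also have "\<dots> \<le> B T * exp ((K+1) * h')"
            using Bpos[of T] by (intro mult_left_mono) (auto simp: exp_ge_add_one_self add.commute)
          also have "\<dots> = B (T + h')" unfolding B_def by (simp add: mult.assoc exp_add[symmetric] algebra_simps)
          finally show ?thesis unfolding h'_def by simp
        qed
      qed
      then have "T + h \<le> T" unfolding T_def using bdd by (rule cSup_upper)
      then show False using hpos by simp
    qed
    then show ?thesis using TS unfolding S_def B_def by auto
  qed
  show ?thesis
  proof (rule ccontr)
    assume "P t1 \<noteq> 0"
    then have p: "P t1 > 0" using nn[of t1] by simp
    define c where "c = exp ((K+1) * (t1 - t0))"
    have c: "c > 0" unfolding c_def by simp
    have "P t1 \<le> (P t1 / (2*c)) * c" using bnd[of "P t1 / (2*c)"] p c unfolding c_def by simp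
    also have "\<dots> = P t1 / 2" using c by simp
    finally show False using p by simp
  qed
qed

lemma gron:
  fixes P :: "real \<Rightarrow> real"
  assumes nn: "\<And>t. P t \<ge> 0" and K: "K \<ge> 0" and z: "P t0 = 0"
   and est: "\<And>t \<eta>. \<eta> > 0 \<Longrightarrow> \<exists>\<delta>>0. \<forall>h. h \<noteq> 0 \<and> \<bar>h\<bar> < \<delta> \<longrightarrow> \<bar>P (t+h) - P t\<bar> \<le> \<bar>h\<bar> * (K * P t + \<eta>)"
  shows "P t = 0"
proof (cases "t0 \<le> t")
  case True then show ?thesis using gron_fwd[OF nn K z est] by blast
next
  case False
  define Q where "Q s = P (- s)" for s
  have "Q (-t) = 0"
  proof (rule gron_fwd[of Q K "-t0"])
    show "Q s \<ge> 0" for s unfolding Q_def by (rule nn)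
    show "Q (-t0) = 0" unfolding Q_def using z by simp
    show "- t0 \<le> - t" using False by simp
    show "K \<ge> 0" by (rule K)
    fix s :: real and \<eta> :: real assume "\<eta> > 0"
    then obtain \<delta> where \<delta>: "\<delta> > 0" "\<forall>h. h \<noteq> 0 \<and> \<bar>h\<bar> < \<delta> \<longrightarrow> \<bar>P (-s+h) - P (-s)\<bar> \<le> \<bar>h\<bar> * (K * P (-s) + \<eta>)"
      using est by blast
    show "\<exists>\<delta>>0. \<forall>h. h \<noteq> 0 \<and> \<bar>h\<bar> < \<delta> \<longrightarrow> \<bar>Q (s+h) - Q s\<bar> \<le> \<bar>h\<bar> * (K * Q s + \<eta>)"
    proof (intro exI[of _ \<delta>] conjI allI impI)
      show "\<delta> > 0" by (rule \<delta>(1))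
      fix h assume "h \<noteq> 0 \<and> \<bar>h\<bar> < \<delta>"
      then show "\<bar>Q (s+h) - Q s\<bar> \<le> \<bar>h\<bar> * (K * Q s + \<eta>)"
        using \<delta>(2)[rule_format, of "-h"] unfolding Q_def by simp
    qed
  qed
  then show ?thesis unfolding Q_def by simp
qed

lemma lip2:
  assumes "lipschitz2 f"
  shows "\<exists>L\<ge>0. \<forall>a b a' b'. \<bar>f a b - f a' b'\<bar> \<le> L * (\<bar>a - a'\<bar> + \<bar>b - b'\<bar>)"
proof -
  obtain C where C: "C-lipschitz_on UNIV (\<lambda>(a,b). f a b)" using assms unfolding lipschitz2_def by blast
  have C0: "C \<ge> 0" using C unfolding lipschitz_on_def by simp
  have "\<bar>f a b - f a' b'\<bar> \<le> C * (\<bar>a - a'\<bar> + \<bar>b - b'\<bar>)" for a b a' b'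
  proof -
    have "dist (f a b) (f a' b') \<le> C * dist (a,b) (a',b')"
      using C unfolding lipschitz_on_def by (metis (no_types, lifting) UNIV_I case_prod_conv)
    also have "dist (a,b) (a',b') \<le> \<bar>a - a'\<bar> + \<bar>b - b'\<bar>"
      unfolding dist_Pair_Pair dist_real_def using sqrt_sum_squares_le_sum_abs
      by (metis abs_abs)
    then have "C * dist (a,b) (a',b') \<le> C * (\<bar>a - a'\<bar> + \<bar>b - b'\<bar>)" using C0 by (simp add: mult_left_mono)
    finally show ?thesis by (simp add: dist_real_def)
  qed
  then show ?thesis using C0 by blast
qed

lemma lip_cont:
  fixes F :: "real \<Rightarrow> real"
  assumes "\<And>a b. \<bar>F a - F b\<bar> \<le> L * \<bar>a - b\<bar>" "L \<ge> 0"
  shows "continuous_on UNIV F"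
proof (rule lipschitz_on_continuous_on)
  show "L-lipschitz_on UNIV F" unfolding lipschitz_on_def dist_real_def using assms by auto
qed

theorem theorem4p3:
  fixes f g :: "real \<Rightarrow> real \<Rightarrow> real"
    and M :: "'a measure" and W :: "'a \<Rightarrow> 'a \<Rightarrow> real" and A :: "'a set"
  assumes "lipschitz2 f" and "lipschitz2 g"
    and "graphon M W"
    and "A \<in> sets M" and "measure M A > 0"
    and "twins M W A"
  shows "dyn_invariant f g M W (cluster_subspace M A)"
proof -
  note gr = assms(3)[unfolded graphon_def]
  interpret prob_space M using gr by blast
  have Asets: "A \<in> sets M" and Apos: "measure M A > 0" by fact+
  have fm: "finite_measure M" by unfold_locales
  have Wm: "(\<lambda>(x,y). W x y) \<in> borel_measurable (M \<Otimes>\<^sub>M M)" using gr by blast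
  have Wb: "\<And>x y. x \<in> space M \<Longrightarrow> y \<in> space M \<Longrightarrow> 0 \<le> W x y \<and> W x y \<le> 1" using gr by blast
  have Wx: "(\<lambda>y. W x y) \<in> borel_measurable M" if "x \<in> space M" for x
    using measurable_Pair2[OF Wm that] by simp
  have Asub: "A \<subseteq> space M" using sets.sets_into_space[OF Asets] .
  have "A \<noteq> {}" using Apos by auto
  then obtain x0 where x0A: "x0 \<in> A" by blast
  then have x0: "x0 \<in> space M" using Asub by blast
  obtain Lf where Lf: "Lf \<ge> 0" "\<And>a b a' b'. \<bar>f a b - f a' b'\<bar> \<le> Lf * (\<bar>a - a'\<bar> + \<bar>b - b'\<bar>)"
    using lip2[OF assms(1)] by blast
  obtain Lg where Lg: "Lg \<ge> 0" "\<And>a b a' b'. \<bar>g a b - g a' b'\<bar> \<le> Lg * (\<bar>a - a'\<bar> + \<bar>b - b'\<bar>)"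
    using lip2[OF assms(2)] by blast
  have gc: "continuous_on UNIV (g c)" for c
    proof (rule lip_cont[of _ Lg])
    show "\<bar>g c a - g c b\<bar> \<le> Lg * \<bar>a - b\<bar>" for a b using Lg(2)[of c a c b] by simp
  qed (rule Lg(1))
  define K0 where "K0 = Lf * (1 + Lg)"
  have K0: "K0 \<ge> 0" unfolding K0_def using Lf Lg by simp
  show ?thesis unfolding dyn_invariant_def
  proof (intro allI impI)
    fix u :: "real \<Rightarrow> 'a \<Rightarrow> real" and t0
    assume H: "graphon_trajectory f g M W u \<and> u t0 \<in> cluster_subspace M A"
    have iu: "\<And>t. integrable M (u t)" using H unfolding graphon_trajectory_def by blast
    have lim: "\<And>t. ((\<lambda>h. \<integral>\<^sup>+x. ennreal \<bar>(u (t + h) x - u t x) / h - graphon_rhs f g M W (u t) x\<bar> \<partial>M)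
            \<longlongrightarrow> 0) (at 0)" using H unfolding graphon_trajectory_def by blast
    define I where "I t c = (\<integral>y. W x0 y * g c (u t y) \<partial>M)" for t c
    define G where "G t c = f c (I t c)" for t c
    have um: "u t \<in> borel_measurable M" for t using iu by auto
    have gum: "(\<lambda>y. g c (u t y)) \<in> borel_measurable M" for t c
      by (rule borel_measurable_continuous_on[OF gc um])
    have intI: "integrable M (\<lambda>y. W x0 y * g c (u t y))" for t c
    proof (rule Bochner_Integration.integrable_bound)
      show "integrable M (\<lambda>y. \<bar>g c 0\<bar> + Lg * \<bar>u t y\<bar>)" using iu by simp
      show "(\<lambda>y. W x0 y * g c (u t y)) \<in> borel_measurable M" using Wx[OF x0] gum by simp
      show "AE y in M. norm (W x0 y * g c (u t y)) \<le> norm (\<bar>g c 0\<bar> + Lg * \<bar>u t y\<bar>)"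
      proof (rule AE_I2)
        fix y assume y: "y \<in> space M"
        have "\<bar>g c (u t y)\<bar> \<le> \<bar>g c 0\<bar> + Lg * \<bar>u t y\<bar>" using Lg(2)[of c "u t y" c 0] by simp
        moreover have "\<bar>W x0 y\<bar> \<le> 1" using Wb[OF x0 y] by simp
        ultimately have "\<bar>W x0 y\<bar> * \<bar>g c (u t y)\<bar> \<le> 1 * (\<bar>g c 0\<bar> + Lg * \<bar>u t y\<bar>)"
          by (intro mult_mono) auto
        then show "norm (W x0 y * g c (u t y)) \<le> norm (\<bar>g c 0\<bar> + Lg * \<bar>u t y\<bar>)"
          using Lg(1) by (simp add: abs_mult)
      qed
    qed
    have Ilip: "\<bar>I t a - I t b\<bar> \<le> Lg * \<bar>a - b\<bar>" for t a b
    proof -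
      have "I t a - I t b = (\<integral>y. W x0 y * g a (u t y) - W x0 y * g b (u t y) \<partial>M)"
        unfolding I_def using intI by simp
      also have "\<bar>\<dots>\<bar> \<le> (\<integral>y. \<bar>W x0 y * g a (u t y) - W x0 y * g b (u t y)\<bar> \<partial>M)"
        by (rule integral_abs_bound)
      also have "\<dots> \<le> (\<integral>y. Lg * \<bar>a - b\<bar> \<partial>M)"
      proof (rule integral_mono)
        show "integrable M (\<lambda>y. \<bar>W x0 y * g a (u t y) - W x0 y * g b (u t y)\<bar>)" using intI by simp
        show "integrable M (\<lambda>y. Lg * \<bar>a - b\<bar>)" by simp
        fix y assume y: "y \<in> space M"
        have "\<bar>W x0 y * g a (u t y) - W x0 y * g b (u t y)\<bar> = \<bar>W x0 y\<bar> * \<bar>g a (u t y) - g b (u t y)\<bar>"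
          by (simp add: abs_mult right_diff_distrib[symmetric])
        also have "\<dots> \<le> 1 * (Lg * \<bar>a - b\<bar>)"
          using Wb[OF x0 y] Lg(2)[of a "u t y" b "u t y"] by (intro mult_mono) auto
        finally show "\<bar>W x0 y * g a (u t y) - W x0 y * g b (u t y)\<bar> \<le> Lg * \<bar>a - b\<bar>" by simp
      qed
      also have "\<dots> = Lg * \<bar>a - b\<bar>" by (simp add: prob_space)
      finally show ?thesis .
    qed
    have Glip: "\<bar>G t a - G t b\<bar> \<le> K0 * \<bar>a - b\<bar>" for t a b
    proof -
      have "\<bar>G t a - G t b\<bar> \<le> Lf * (\<bar>a - b\<bar> + \<bar>I t a - I t b\<bar>)" unfolding G_def by (rule Lf(2))
      also have "\<dots> \<le> Lf * (\<bar>a - b\<bar> + Lg * \<bar>a - b\<bar>)" using Ilip Lf(1) by (intro mult_left_mono) auto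
      finally show ?thesis unfolding K0_def by (simp add: algebra_simps)
    qed
    have Gc: "continuous_on UNIV (G t)" for t by (rule lip_cont[OF Glip K0])
    have rhsA: "graphon_rhs f g M W (u t) x = G t (u t x)" if xA: "x \<in> A" for t x
    proof -
      have x: "x \<in> space M" using xA Asub by blast
      have ae: "AE y in M. W x y = W x0 y" using assms(6) xA x0A unfolding twins_def by blast
      have "(\<integral>y. W x y * g (u t x) (u t y) \<partial>M) = I t (u t x)"
        unfolding I_def
        by (rule integral_cong_AE) (use Wx[OF x] Wx[OF x0] gum ae in auto)
      then show ?thesis unfolding graphon_rhs_def G_def by simp
    qed
    have iG: "integrable M (\<lambda>x. G t (u t x))" for t
    proof (rule Bochner_Integration.integrable_bound)
      show "integrable M (\<lambda>x. \<bar>G t 0\<bar> + K0 * \<bar>u t x\<bar>)" using iu by simp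
      show "(\<lambda>x. G t (u t x)) \<in> borel_measurable M" by (rule borel_measurable_continuous_on[OF Gc um])
      show "AE x in M. norm (G t (u t x)) \<le> norm (\<bar>G t 0\<bar> + K0 * \<bar>u t x\<bar>)"
      proof (rule AE_I2)
        fix x
        have "\<bar>G t (u t x) - G t 0\<bar> \<le> K0 * \<bar>u t x\<bar>" using Glip[of t "u t x" 0] by simp
        moreover have "K0 * \<bar>u t x\<bar> \<ge> 0" using K0 by simp
        ultimately show "norm (G t (u t x)) \<le> norm (\<bar>G t 0\<bar> + K0 * \<bar>u t x\<bar>)" by simp
      qed
    qed
    define P where "P t = PhiA M A (u t)" for t
    have Pnn: "P t \<ge> 0" for t unfolding P_def PhiA_def by (rule integral_nonneg_AE) (simp add: AE_I2)
    have est: "\<exists>\<delta>>0. \<forall>h. h \<noteq> 0 \<and> \<bar>h\<bar> < \<delta> \<longrightarrow> \<bar>P (t+h) - P t\<bar> \<le> \<bar>h\<bar> * (2*K0 * P t + \<eta>)"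
      if eta: "\<eta> > 0" for t \<eta>
    proof -
      have "eventually (\<lambda>h. (\<integral>\<^sup>+x. ennreal \<bar>(u (t + h) x - u t x) / h - graphon_rhs f g M W (u t) x\<bar> \<partial>M) < ennreal (\<eta>/2)) (at 0)"
      proof -
        have "0 < ennreal (\<eta>/2)" using eta by simp
        from order_tendstoD(2)[OF lim[of t] this] show ?thesis .
      qed
      then obtain d where d: "d > 0" "\<And>h. h \<noteq> 0 \<Longrightarrow> dist h 0 < d \<Longrightarrow>
          (\<integral>\<^sup>+x. ennreal \<bar>(u (t + h) x - u t x) / h - graphon_rhs f g M W (u t) x\<bar> \<partial>M) < ennreal (\<eta>/2)"
        unfolding eventually_at by blast
      show ?thesis
      proof (intro exI[of _ d] conjI allI impI)
        show "d > 0" by fact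
        fix h :: real assume h: "h \<noteq> 0 \<and> \<bar>h\<bar> < d"
        define q where "q x = (u (t + h) x - u t x) / h - G t (u t x)" for x
        have iq: "integrable M q" unfolding q_def using iu iG by simp
        have k: "\<bar>P (t+h) - P t\<bar> \<le> \<bar>h\<bar> * (2*K0*P t + 2 * (\<integral>x. \<bar>q x\<bar> * indicator A x \<partial>M))"
          unfolding P_def
        proof (rule key[OF fm Asets Apos iu iu iG iq K0 Glip])
          fix x show "u (t + h) x = u t x + h * G t (u t x) + h * q x"
          proof -
            have "h * ((u (t + h) x - u t x) / h) = u (t + h) x - u t x" using h by simp
            then show "u (t + h) x = u t x + h * G t (u t x) + h * q x"
              unfolding q_def by (simp add: right_diff_distrib)
          qed
        qed
        have qnn: "0 \<le> (\<integral>x. \<bar>q x\<bar> * indicator A x \<partial>M)" by (rule integral_nonneg_AE) (simp add: AE_I2)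
        have "ennreal (\<integral>x. \<bar>q x\<bar> * indicator A x \<partial>M) = (\<integral>\<^sup>+x. ennreal (\<bar>q x\<bar> * indicator A x) \<partial>M)"
          using iq Asets by (intro nn_integral_eq_integral[symmetric]) (auto intro: integrable_real_mult_indicator)
        also have "\<dots> \<le> (\<integral>\<^sup>+x. ennreal \<bar>(u (t + h) x - u t x) / h - graphon_rhs f g M W (u t) x\<bar> \<partial>M)"
        proof (rule nn_integral_mono)
          fix x
          show "ennreal (\<bar>q x\<bar> * indicator A x) \<le> ennreal \<bar>(u (t + h) x - u t x) / h - graphon_rhs f g M W (u t) x\<bar>"
          proof (cases "x \<in> A")
            case True
            then show ?thesis unfolding q_def using rhsA[OF True, of t] by simp
          next
            case False
            then show ?thesis by simp
          qed
        qed
        also have "\<dots> < ennreal (\<eta>/2)" using d(2)[of h] h by simp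
        finally have lt: "(\<integral>x. \<bar>q x\<bar> * indicator A x \<partial>M) < \<eta>/2"
          using ennreal_less_iff[OF qnn] by blast
        show "\<bar>P (t+h) - P t\<bar> \<le> \<bar>h\<bar> * (2*K0 * P t + \<eta>)"
        proof -
          have "\<bar>h\<bar> * (2*K0*P t + 2 * (\<integral>x. \<bar>q x\<bar> * indicator A x \<partial>M)) \<le> \<bar>h\<bar> * (2*K0 * P t + \<eta>)"
            using lt by (intro mult_left_mono) auto
          then show ?thesis using k by linarith
        qed
      qed
    qed
    have muA: "(\<integral>x. c * indicator A x \<partial>M) = c * measure M A" for c
      using Asets by simp
    obtain c where c: "AE x in M. x \<in> A \<longrightarrow> u t0 x = c"
      using H unfolding cluster_subspace_def by blast
    have "(\<integral>x. u t0 x * indicator A x \<partial>M) = (\<integral>x. c * indicator A x \<partial>M)"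
      by (rule integral_cong_AE) (use um Asets c in \<open>auto simp: indicator_def\<close>)
    then have mc: "mA M A (u t0) = c" unfolding mA_def muA using Apos by simp
    have P0: "P t0 = 0"
    proof -
      have "P t0 = (\<integral>x. 0 \<partial>M)" unfolding P_def PhiA_def mc
        by (rule integral_cong_AE) (use um Asets c in \<open>auto simp: indicator_def\<close>)
      then show ?thesis by simp
    qed
    fix t
    have "P t = 0" by (rule gron[OF Pnn _ P0 est]) (use K0 in auto)
    then have "AE x in M. \<bar>u t x - mA M A (u t)\<bar> * indicator A x = 0"
      unfolding P_def PhiA_def
      by (subst integral_nonneg_eq_0_iff_AE[symmetric]) (use iu Asets in \<open>auto intro: integrable_real_mult_indicator\<close>)
    then have "AE x in M. x \<in> A \<longrightarrow> u t x = mA M A (u t)"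
      by eventually_elim (auto simp: indicator_def)
    then show "u t \<in> cluster_subspace M A" unfolding cluster_subspace_def using iu by blast
  qed
qed

end
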